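(* Let $\mathcal X\subset\mathbb R^d$ be convex and compact and let $f:\mathcal X\to\mathcal X$ be any function. Consider the two-player game in which both players have strategy set $\mathcal X$ and $u_1(x,y)=-\|x-y\|_2^2$, $u_2(x,y)=-\|y-f(x)\|_2^2$. Let $\mu\in\Delta(\mathcal X\times\mathcal X)$ be an $\varepsilon$-approximate normal-form correlated equilibrium of this game, and write $\mathbb E_x$ for expectation over the $x$-marginal of $\mu$. Then for every convex function $Q:\mathcal X\to\mathbb R$ that is $1$-Lipschitz with respect to $\|\cdot\|_2$, $$\mathbb E_x\big[Q(x)-Q(f(x))\big]\le 2\sqrt{\varepsilon}.$$
   Context: $\Delta(S)$ denotes the set of finite-support probability distributions on $S$. For a game with strategy sets $\mathcal X_i$ and utilities $u_i$, an $\varepsilon$-approximate normal-form correlated equilibrium is a distribution $\mu$ over strategy profiles such that $\mathbb E_{x\sim\mu}[u_i(\phi_i(x_i),x_{-i})-u_i(x)]\le\varepsilon$ for every player $i$ and every (arbitrary) map $\phi_i:\mathcal X_i\to\mathcal X_i$. *)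

theory Defs
  imports "HOL-Analysis.Analysis" "HOL-Probability.Probability"
begin

definition approx_nf_CE2 ::
  "'a set \<Rightarrow> 'b set \<Rightarrow> ('a \<Rightarrow> 'b \<Rightarrow> real) \<Rightarrow> ('a \<Rightarrow> 'b \<Rightarrow> real) \<Rightarrow> real \<Rightarrow> ('a \<times> 'b) pmf \<Rightarrow> bool"
where
  "approx_nf_CE2 X Y u1 u2 eps \<mu> \<longleftrightarrow>
     finite (set_pmf \<mu>) \<and> set_pmf \<mu> \<subseteq> X \<times> Y \<and>
     (\<forall>\<phi>. \<phi> ` X \<subseteq> X \<longrightarrow>
        measure_pmf.expectation \<mu> (\<lambda>(x, y). u1 (\<phi> x) y - u1 x y) \<le> eps) \<and>
     (\<forall>\<phi>. \<phi> ` Y \<subseteq> Y \<longrightarrow>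
        measure_pmf.expectation \<mu> (\<lambda>(x, y). u2 x (\<phi> y) - u2 x y) \<le> eps)"

end

theory Submission imports Defs begin

lemma wcs:
  fixes w d :: "'b \<Rightarrow> real"
  assumes "finite A" "\<And>a. a \<in> A \<Longrightarrow> w a \<ge> 0" "sum w A = 1"
  shows "(\<Sum>a\<in>A. w a * d a)\<^sup>2 \<le> (\<Sum>a\<in>A. w a * (d a)\<^sup>2)"
proof -
  define D where "D = (\<Sum>a\<in>A. w a * d a)"
  have "0 \<le> (\<Sum>a\<in>A. w a * (d a - D)\<^sup>2)"
    by (rule sum_nonneg) (use assms(2) in auto)
  also have "\<dots> = (\<Sum>a\<in>A. w a * (d a)\<^sup>2 - 2 * D * (w a * d a) + D\<^sup>2 * w a)"
    by (rule sum.cong) (auto simp: power2_eq_square algebra_simps)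
  also have "\<dots> = (\<Sum>a\<in>A. w a * (d a)\<^sup>2) - 2 * D * D + D\<^sup>2 * 1"
    by (simp add: sum.distrib sum_subtractf sum_distrib_left[symmetric] D_def assms(3))
  finally show ?thesis by (simp add: D_def power2_eq_square)
qed

lemma fact1:
  fixes a M :: "'a::real_inner" and W :: real and p :: "'c \<Rightarrow> real" and b :: "'c \<Rightarrow> 'a"
  assumes "finite T" "sum p T = W" "(\<Sum>z\<in>T. p z *\<^sub>R b z) = W *\<^sub>R M"
  shows "(\<Sum>z\<in>T. p z * ((norm (a - b z))\<^sup>2 - (norm (M - b z))\<^sup>2)) = W * (norm (a - M))\<^sup>2"
proof -
  have "(\<Sum>z\<in>T. p z * ((norm (a - b z))\<^sup>2 - (norm (M - b z))\<^sup>2))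
      = (\<Sum>z\<in>T. p z * (inner a a - inner M M) - 2 * inner (a - M) (p z *\<^sub>R b z))"
    by (rule sum.cong) (auto simp: power2_norm_eq_inner inner_diff_left inner_diff_right inner_commute algebra_simps)
  also have "\<dots> = W * (inner a a - inner M M) - 2 * inner (a - M) (W *\<^sub>R M)"
  proof -
    have "(\<Sum>z\<in>T. inner (a - M) (p z *\<^sub>R b z)) = inner (a - M) (W *\<^sub>R M)"
      by (simp only: inner_sum_right[symmetric] assms(3))
    then show ?thesis
      by (simp add: sum_subtractf sum_distrib_left[symmetric] sum_distrib_right[symmetric] assms(2) del: inner_scaleR_right)
  qed
  also have "\<dots> = W * (norm (a - M))\<^sup>2"
    by (simp add: power2_norm_eq_inner inner_diff_left inner_diff_right inner_commute algebra_simps)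
  finally show ?thesis .
qed

lemma core:
  fixes S :: "('a::euclidean_space \<times> 'a) set" and p :: "'a \<times> 'a \<Rightarrow> real"
  assumes fin: "finite S" and ppos: "\<And>z. z \<in> S \<Longrightarrow> p z > 0" and psum: "sum p S = 1"
    and SX: "S \<subseteq> X \<times> X" and cX: "convex X" and cQ: "convex_on X Q" and lQ: "1-lipschitz_on X Q"
    and hyp: "\<And>\<phi>. \<phi> ` X \<subseteq> X \<Longrightarrow>
       (\<Sum>z\<in>S. p z * ((norm (fst z - snd z))\<^sup>2 - (norm (\<phi> (fst z) - snd z))\<^sup>2)) \<le> eps"
  shows "(\<Sum>z\<in>S. p z * (Q (fst z) - Q (snd z))) \<le> sqrt eps"
proof -
  define A where "A = fst ` S"
  define Sa where "Sa a = {z \<in> S. fst z = a}" for a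
  define w where "w a = sum p (Sa a)" for a
  define m where "m a = (\<Sum>z\<in>Sa a. (p z / w a) *\<^sub>R snd z)" for a
  define \<phi> where "\<phi> a = (if a \<in> A then m a else a)" for a
  define d where "d a = norm (a - m a)" for a
  have finA: "finite A" using fin by (simp add: A_def)
  have finSa: "finite (Sa a)" for a using fin by (simp add: Sa_def)
  have SaX: "z \<in> Sa a \<Longrightarrow> snd z \<in> X" for z a using SX by (auto simp: Sa_def)
  have Sane: "a \<in> A \<Longrightarrow> Sa a \<noteq> {}" for a by (force simp: A_def Sa_def)
  have AX: "A \<subseteq> X" using SX by (auto simp: A_def)
  have wpos: "a \<in> A \<Longrightarrow> w a > 0" for a
    unfolding w_def by (rule sum_pos[OF finSa Sane]) (auto simp: Sa_def ppos)
  have wsum1: "a \<in> A \<Longrightarrow> (\<Sum>z\<in>Sa a. p z / w a) = 1" for a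
    using wpos[of a] by (simp add: sum_divide_distrib[symmetric] w_def)
  have pnn: "z \<in> Sa a \<Longrightarrow> a \<in> A \<Longrightarrow> p z / w a \<ge> 0" for z a
  proof -
    assume "z \<in> Sa a" "a \<in> A"
    then have "p z > 0" "w a > 0" using wpos ppos by (auto simp: Sa_def)
    then show ?thesis by simp
  qed
  have mX: "a \<in> A \<Longrightarrow> m a \<in> X" for a
    unfolding m_def by (rule convex_sum[OF finSa cX wsum1]) (auto intro: pnn SaX)
  have \<phi>X: "\<phi> ` X \<subseteq> X" using mX by (auto simp: \<phi>_def)
  have mw: "a \<in> A \<Longrightarrow> (\<Sum>z\<in>Sa a. p z *\<^sub>R snd z) = w a *\<^sub>R m a" for a
    using wpos[of a] by (simp add: m_def scaleR_sum_right)
  have split: "(\<Sum>z\<in>S. g z) = (\<Sum>a\<in>A. \<Sum>z\<in>Sa a. g z)" for g :: "_ \<Rightarrow> real"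
    unfolding A_def Sa_def by (rule sum.image_gen[OF fin])
  have f1: "a \<in> A \<Longrightarrow> (\<Sum>z\<in>Sa a. p z * ((norm (fst z - snd z))\<^sup>2 - (norm (\<phi> (fst z) - snd z))\<^sup>2))
     = w a * (d a)\<^sup>2" for a
  proof -
    assume a: "a \<in> A"
    have "(\<Sum>z\<in>Sa a. p z * ((norm (fst z - snd z))\<^sup>2 - (norm (\<phi> (fst z) - snd z))\<^sup>2))
       = (\<Sum>z\<in>Sa a. p z * ((norm (a - snd z))\<^sup>2 - (norm (m a - snd z))\<^sup>2))"
      using a by (intro sum.cong) (auto simp: Sa_def \<phi>_def)
    also have "\<dots> = w a * (d a)\<^sup>2"
      unfolding d_def by (rule fact1[OF finSa w_def[symmetric] mw[OF a]])
    finally show ?thesis .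
  qed
  have f2: "a \<in> A \<Longrightarrow> (\<Sum>z\<in>Sa a. p z * (Q (fst z) - Q (snd z))) \<le> w a * d a" for a
  proof -
    assume a: "a \<in> A"
    have j: "Q (m a) \<le> (\<Sum>z\<in>Sa a. (p z / w a) * Q (snd z))"
      unfolding m_def by (rule convex_on_sum[OF finSa Sane[OF a] cQ wsum1[OF a]]) (auto intro: pnn[OF _ a] SaX)
    have "(\<Sum>z\<in>Sa a. (p z / w a) * Q (snd z)) = (\<Sum>z\<in>Sa a. p z * Q (snd z)) / w a"
      by (simp add: sum_divide_distrib)
    with j have "Q (m a) \<le> (\<Sum>z\<in>Sa a. p z * Q (snd z)) / w a" by simp
    with wpos[OF a] have j2: "w a * Q (m a) \<le> (\<Sum>z\<in>Sa a. p z * Q (snd z))"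
      by (simp add: pos_le_divide_eq mult.commute)
    have l: "Q a - Q (m a) \<le> d a"
      using lipschitz_onD[OF lQ, of a "m a"] AX a mX[OF a]
      by (auto simp: d_def dist_norm)
    have "(\<Sum>z\<in>Sa a. p z * (Q (fst z) - Q (snd z))) = (\<Sum>z\<in>Sa a. p z * Q a - p z * Q (snd z))"
      by (intro sum.cong) (auto simp: Sa_def algebra_simps)
    also have "\<dots> = w a * Q a - (\<Sum>z\<in>Sa a. p z * Q (snd z))"
      by (simp add: sum_subtractf sum_distrib_right[symmetric] w_def)
    also have "\<dots> \<le> w a * (Q a - Q (m a))" using j2 by (simp add: algebra_simps)
    also have "\<dots> \<le> w a * d a" using l wpos[OF a] by (simp add: mult_left_mono)
    finally show ?thesis .
  qed
  have wA: "sum w A = 1"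
    using psum by (simp add: w_def split)
  have eq: "(\<Sum>a\<in>A. w a * (d a)\<^sup>2) \<le> eps"
    using hyp[OF \<phi>X] by (simp add: split f1)
  have "(\<Sum>z\<in>S. p z * (Q (fst z) - Q (snd z))) \<le> (\<Sum>a\<in>A. w a * d a)"
    unfolding split by (rule sum_mono) (rule f2)
  also have "\<dots> \<le> sqrt eps"
  proof (rule real_le_rsqrt)
    show "(\<Sum>a\<in>A. w a * d a)\<^sup>2 \<le> eps"
      using wcs[OF finA _ wA, of d] wpos eq by fastforce
  qed
  finally show ?thesis .
qed

lemma exp_sum:
  assumes "finite (set_pmf M)"
  shows "measure_pmf.expectation M g = (\<Sum>z\<in>set_pmf M. pmf M z * g z)"
  by (subst integral_measure_pmf_real[OF assms]) (auto simp: mult.commute)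

theorem lemma3p2:
  fixes X :: "'a::euclidean_space set"
    and f :: "'a \<Rightarrow> 'a"
    and \<mu> :: "('a \<times> 'a) pmf"
    and eps :: real
    and Q :: "'a \<Rightarrow> real"
  assumes "convex X" and "compact X"
    and "f ` X \<subseteq> X"
    and "approx_nf_CE2 X X (\<lambda>x y. - (norm (x - y))\<^sup>2) (\<lambda>x y. - (norm (y - f x))\<^sup>2) eps \<mu>"
    and "convex_on X Q"
    and "1-lipschitz_on X Q"
  shows "measure_pmf.expectation (map_pmf fst \<mu>) (\<lambda>x. Q x - Q (f x)) \<le> 2 * sqrt eps"
proof -
  define S where "S = set_pmf \<mu>"
  define h where "h = (\<lambda>z::'a\<times>'a. (snd z, f (fst z)))"
  define \<nu> where "\<nu> = map_pmf h \<mu>"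
  note ce = assms(4)[unfolded approx_nf_CE2_def]
  have fin: "finite S" and SX: "S \<subseteq> X \<times> X" using ce by (auto simp: S_def)
  have finv: "finite (set_pmf \<nu>)" using fin by (simp add: \<nu>_def S_def)
  have SXv: "set_pmf \<nu> \<subseteq> X \<times> X" using SX assms(3) by (force simp: \<nu>_def S_def h_def)
  have E: "measure_pmf.expectation \<mu> g = (\<Sum>z\<in>S. pmf \<mu> z * g z)" for g
    using exp_sum[of \<mu>] fin by (simp add: S_def)
  have Ev: "(\<Sum>z\<in>set_pmf \<nu>. pmf \<nu> z * g z) = measure_pmf.expectation \<mu> (\<lambda>z. g (h z))" for g
    using exp_sum[OF finv, of g] by (simp add: \<nu>_def)
  have P1: "(\<Sum>z\<in>S. pmf \<mu> z * (Q (fst z) - Q (snd z))) \<le> sqrt eps"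
  proof (rule core[OF fin _ _ SX assms(1) assms(5) assms(6)])
    show "\<And>z. z \<in> S \<Longrightarrow> 0 < pmf \<mu> z" by (simp add: S_def pmf_positive)
    show "sum (pmf \<mu>) S = 1" using fin by (simp add: S_def sum_pmf_eq_1)
    fix \<phi> :: "'a \<Rightarrow> 'a" assume "\<phi> ` X \<subseteq> X"
    with ce have "measure_pmf.expectation \<mu> (\<lambda>(x, y). - (norm (\<phi> x - y))\<^sup>2 - - (norm (x - y))\<^sup>2) \<le> eps"
      by blast
    then show "(\<Sum>z\<in>S. pmf \<mu> z * ((norm (fst z - snd z))\<^sup>2 - (norm (\<phi> (fst z) - snd z))\<^sup>2)) \<le> eps"
      by (simp add: E case_prod_beta)
  qed
  have P2: "(\<Sum>z\<in>set_pmf \<nu>. pmf \<nu> z * (Q (fst z) - Q (snd z))) \<le> sqrt eps"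
  proof (rule core[OF finv _ _ SXv assms(1) assms(5) assms(6)])
    show "\<And>z. z \<in> set_pmf \<nu> \<Longrightarrow> 0 < pmf \<nu> z" by (simp add: pmf_positive)
    show "sum (pmf \<nu>) (set_pmf \<nu>) = 1" using finv by (simp add: sum_pmf_eq_1)
    fix \<phi> :: "'a \<Rightarrow> 'a" assume "\<phi> ` X \<subseteq> X"
    with ce have "measure_pmf.expectation \<mu> (\<lambda>(x, y). - (norm (\<phi> y - f x))\<^sup>2 - - (norm (y - f x))\<^sup>2) \<le> eps"
      by blast
    then show "(\<Sum>z\<in>set_pmf \<nu>. pmf \<nu> z * ((norm (fst z - snd z))\<^sup>2 - (norm (\<phi> (fst z) - snd z))\<^sup>2)) \<le> eps"
      by (simp add: Ev E h_def case_prod_beta)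
  qed
  have P2': "(\<Sum>z\<in>S. pmf \<mu> z * (Q (snd z) - Q (f (fst z)))) \<le> sqrt eps"
    using P2 by (simp add: Ev E h_def)
  have "measure_pmf.expectation (map_pmf fst \<mu>) (\<lambda>x. Q x - Q (f x))
      = (\<Sum>z\<in>S. pmf \<mu> z * (Q (fst z) - Q (snd z)) + pmf \<mu> z * (Q (snd z) - Q (f (fst z))))"
    by (simp add: E algebra_simps)
  also have "\<dots> \<le> sqrt eps + sqrt eps"
    using P1 P2' by (simp add: sum.distrib)
  finally show ?thesis by simp
qed

end
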